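(* Let $\mathbf H$ be a symmetric positive semidefinite $d\times d$ matrix partitioned into diagonal blocks $\mathbf H_{11},\dots,\mathbf H_{LL}$, let $\mathbf B=\mathrm{blkdiag}(\mathbf H_{11},\dots,\mathbf H_{LL})$ and $\mathbf E=\mathbf H-\mathbf B$, and assume $T=\mathrm{Tr}(\mathbf H)>0$ (note $\mathrm{Tr}(\mathbf B)=T$). Let $\alpha>1$ and $\Lambda_*=\max\{\lambda_{\max}(\mathbf H),\lambda_{\max}(\mathbf B)\}$. Then $$\big|\widetilde{\mathcal R}_\alpha(\mathbf H)-\widetilde{\mathcal R}_\alpha(\mathbf B)\big|\le\alpha\Big(\frac{\Lambda_*}{T}\Big)^{\alpha-1}\frac{\sqrt d\,\|\mathbf E\|_F}{T}.$$
   Context: For a symmetric positive semidefinite matrix $\mathbf M$ with eigenvalues $\lambda_1,\dots,\lambda_m\ge0$ and $\mathrm{Tr}(\mathbf M)>0$, $\widetilde{\mathcal R}_\alpha(\mathbf M)=\sum_{i=1}^m(\lambda_i/\mathrm{Tr}(\mathbf M))^\alpha$ (with $0^\alpha=0$). $\|\cdot\|_F$ is the Frobenius norm. *)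

theory Defs
  imports "Jordan_Normal_Form.Matrix" "Jordan_Normal_Form.Char_Poly"
begin

definition mtrace :: "real mat \<Rightarrow> real" where
  "mtrace M = (\<Sum>i<dim_row M. M $$ (i, i))"

definition frob_norm :: "real mat \<Rightarrow> real" where
  "frob_norm M = sqrt (\<Sum>i<dim_row M. \<Sum>j<dim_col M. (M $$ (i, j))^2)"

definition sym_psd :: "nat \<Rightarrow> real mat \<Rightarrow> bool" where
  "sym_psd d M \<longleftrightarrow> M \<in> carrier_mat d d \<and> transpose_mat M = M \<and>
     (\<forall>v \<in> carrier_vec d. v \<bullet> (M *\<^sub>v v) \<ge> 0)"

definition eig_mult :: "real mat \<Rightarrow> real \<Rightarrow> nat" where
  "eig_mult M x = order x (char_poly M)"

text \<open>Normalised Renyi quantity: sum over the eigenvalues, counted with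
  multiplicity, of (lambda / Tr M) to the power alpha (with 0 powr alpha = 0).\<close>
definition renyi_tilde :: "real \<Rightarrow> real mat \<Rightarrow> real" where
  "renyi_tilde \<alpha> M =
     (\<Sum>x\<in>{x. eigenvalue M x}. real (eig_mult M x) * (x / mtrace M) powr \<alpha>)"

definition lambda_max :: "real mat \<Rightarrow> real" where
  "lambda_max M = Max {x. eigenvalue M x}"

text \<open>Block-diagonal part of M w.r.t. a block labelling blk of the indices.\<close>
definition blkdiag_part :: "(nat \<Rightarrow> nat) \<Rightarrow> real mat \<Rightarrow> real mat" where
  "blkdiag_part blk M =
     mat (dim_row M) (dim_col M) (\<lambda>(i, j). if blk i = blk j then M $$ (i, j) else 0)"

end

theory Submission
  imports Defs "Jordan_Normal_Form.Schur_Decomposition"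
begin


lemma sym_real_eigenvalue:
  fixes A :: "real mat"
  assumes A: "A \<in> carrier_mat n n" and sym: "transpose_mat A = A" and n: "n > 0"
  shows "\<exists>e. eigenvalue A e"
proof -
  define Ac where "Ac = map_mat complex_of_real A"
  have Ac: "Ac \<in> carrier_mat n n" using A unfolding Ac_def by auto
  have cp: "char_poly Ac = map_poly of_real (char_poly A)"
    unfolding Ac_def by (rule of_real_hom.char_poly_hom[OF A])
  obtain as where as: "char_poly Ac = (\<Prod>a\<leftarrow>as. [:- a, 1:])" "length as = n"
    using char_poly_factorized[OF Ac] by blast
  define c where "c = hd as"
  have "c \<in> set as" using as(2) n unfolding c_def by (cases as, auto)
  hence "poly (char_poly Ac) c = 0" unfolding as(1)
    by (induct as, auto)
  hence "eigenvalue Ac c" using eigenvalue_root_char_poly[OF Ac] by auto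
  then obtain z where z: "z \<in> carrier_vec n" "z \<noteq> 0\<^sub>v n" "Ac *\<^sub>v z = c \<cdot>\<^sub>v z"
    unfolding eigenvalue_def eigenvector_def using Ac by auto
  have zi: "(\<Sum>j<n. Ac $$ (i,j) * z $ j) = c * z $ i" if "i < n" for i
  proof -
    have "(Ac *\<^sub>v z) $ i = c * z $ i" using z that by simp
    thus ?thesis using that Ac z unfolding mult_mat_vec_def scalar_prod_def
      by (auto simp: lessThan_atLeast0)
  qed
  define S where "S = (\<Sum>i<n. \<Sum>j<n. cnj (z $ i) * Ac $$ (i,j) * z $ j)"
  define N where "N = (\<Sum>i<n. cnj (z $ i) * z $ i)"
  have "S = (\<Sum>i<n. cnj (z $ i) * (\<Sum>j<n. Ac $$ (i,j) * z $ j))"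
    unfolding S_def by (simp add: sum_distrib_left mult.assoc)
  also have "\<dots> = (\<Sum>i<n. c * (cnj (z $ i) * z $ i))"
    by (rule sum.cong, simp, subst zi, auto)
  also have "\<dots> = c * N" unfolding N_def by (simp add: sum_distrib_left)
  finally have SN: "S = c * N" .
  have "cnj S = (\<Sum>i<n. \<Sum>j<n. z $ i * Ac $$ (i,j) * cnj (z $ j))"
    unfolding S_def using A by (simp add: Ac_def)
  also have "\<dots> = (\<Sum>j<n. \<Sum>i<n. z $ i * Ac $$ (i,j) * cnj (z $ j))" by (rule sum.swap)
  also have "\<dots> = S" unfolding S_def
  proof (intro sum.cong refl)
    fix i j assume "i \<in> {..<n}" "j \<in> {..<n}"
    hence "A $$ (j, i) = A $$ (i, j)" using A sym
      by (metis carrier_matD(1) carrier_matD(2) index_transpose_mat(1) lessThan_iff)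
    thus "z $ j * Ac $$ (j, i) * cnj (z $ i) = cnj (z $ i) * Ac $$ (i, j) * z $ j"
      using A \<open>i \<in> _\<close> \<open>j \<in> _\<close> by (simp add: Ac_def)
  qed
  finally have cS: "cnj S = S" .
  have Nreal: "N = of_real (\<Sum>i<n. (cmod (z $ i))^2)" unfolding N_def of_real_sum
    by (intro sum.cong refl) (metis complex_norm_square mult.commute)
  have "\<exists>i<n. z $ i \<noteq> 0" using z by (metis carrier_vecD eq_vecI index_zero_vec(1) index_zero_vec(2))
  then obtain i0 where i0: "i0 < n" "z $ i0 \<noteq> 0" by blast
  have "(\<Sum>i<n. (cmod (z $ i))^2) \<ge> (cmod (z $ i0))^2"
    by (rule member_le_sum, insert i0, auto)
  hence Npos: "(\<Sum>i<n. (cmod (z $ i))^2) > 0" using i0 by (smt (verit) norm_eq_zero zero_less_power2)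
  have "cnj c = c"
  proof -
    have "cnj c * N = c * N" using cS SN Nreal by (metis complex_cnj_complex_of_real complex_cnj_mult)
    moreover have "N \<noteq> 0" using Npos unfolding Nreal of_real_eq_0_iff by linarith
    ultimately show ?thesis by simp
  qed
  hence cr: "c = of_real (Re c)" by (metis Reals_cnj_iff of_real_Re)
  have "of_real (poly (char_poly A) (Re c)) = poly (char_poly Ac) c"
    unfolding cp by (subst cr, simp add: of_real_hom.poly_map_poly)
  hence "poly (char_poly A) (Re c) = 0" using \<open>poly (char_poly Ac) c = 0\<close> by simp
  thus ?thesis using eigenvalue_root_char_poly[OF A] by blast
qed



lemma conj_real_vec[simp]: "conjugate (w :: real vec) = w"
  by (rule eq_vecI, auto simp: conjugate_vec_def)

lemma self_sprod_nonneg: "(w :: real vec) \<bullet> w \<ge> 0"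
  unfolding scalar_prod_def by (auto intro: sum_nonneg)

lemma orth_completion:
  fixes v :: "real vec"
  assumes v: "v \<in> carrier_vec n" and v1: "v \<bullet> v = 1"
  shows "\<exists>W. W \<in> carrier_mat n n \<and> transpose_mat W * W = 1\<^sub>m n \<and> col W 0 = v"
proof -
  interpret cof_vec_space n "TYPE(real)" .
  have v0: "v \<noteq> 0\<^sub>v n" using v1 v by auto
  define b where "b = basis_completion v"
  from basis_completion[OF v v0, folded b_def]
  have dist_b: "distinct b" 
    and indep: "\<not> lin_dep (set b)" and b: "set b \<subseteq> carrier_vec n" and hdb: "hd b = v" 
    and len_b: "length b = n" by auto
  have n: "n > 0" using v0 v by (cases n, auto)
  from hdb len_b n obtain vs where bv: "b = v # vs" by (cases b, auto)
  define ws where "ws = gram_schmidt n b"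
  from gram_schmidt_result[OF b dist_b indep refl, folded ws_def]
  have ws: "set ws \<subseteq> carrier_vec n" "corthogonal ws" "length ws = n" 
    by (auto simp: len_b)
  from gram_schmidt_hd[OF v, of vs, folded bv] have hdws: "hd ws = v" unfolding ws_def .
  define us where "us = map (\<lambda>w. (1 / sqrt (w \<bullet> w)) \<cdot>\<^sub>v w) ws"
  have len_us: "length us = n" using ws unfolding us_def by auto
  have wsc: "i < n \<Longrightarrow> ws ! i \<in> carrier_vec n" for i using ws by auto
  have wsnz: "i < n \<Longrightarrow> ws ! i \<bullet> ws ! i \<noteq> 0" for i
    using corthogonalD[OF ws(2), of i i] ws(3) by auto
  have wspos: "i < n \<Longrightarrow> ws ! i \<bullet> ws ! i > 0" for i
    using wsnz[of i] self_sprod_nonneg[of "ws ! i"] by (simp add: order_less_le)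
  have orth: "i < n \<Longrightarrow> j < n \<Longrightarrow> i \<noteq> j \<Longrightarrow> ws ! i \<bullet> ws ! j = 0" for i j
    using corthogonalD[OF ws(2), of i j] ws(3) by auto
  have usij: "us ! i \<bullet> us ! j = (if i = j then 1 else 0)" if ij: "i < n" "j < n" for i j
  proof -
    have "us ! i \<bullet> us ! j = (1 / sqrt (ws!i \<bullet> ws!i)) * (1 / sqrt (ws!j \<bullet> ws!j)) * (ws ! i \<bullet> ws ! j)"
      unfolding us_def using ij ws wsc[OF ij(1)] wsc[OF ij(2)] by simp
    thus ?thesis using orth[OF ij] wspos[OF ij(1)] 
      by (auto simp: real_sqrt_mult[symmetric])
  qed
  define W where "W = mat_of_cols n us"
  have W: "W \<in> carrier_mat n n" unfolding W_def using len_us by (metis mat_of_cols_carrier(1))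
  have colW: "i < n \<Longrightarrow> col W i = us ! i" for i unfolding W_def
    by (rule col_mat_of_cols, insert len_us wsc, auto simp: us_def)
  have "transpose_mat W * W = 1\<^sub>m n"
    by (rule eq_matI, insert W, auto simp: colW usij)
  moreover have "col W 0 = v" using colW[OF n] hdws ws(3) n v1 unfolding us_def
    by (cases ws, auto)
  ultimately show ?thesis using W by blast
qed



definition dg :: "nat \<Rightarrow> (nat \<Rightarrow> real) \<Rightarrow> real mat" where
  "dg n f = mat n n (\<lambda>(i,j). if i = j then f i else 0)"

lemma sandwich_entry:
  fixes X W :: "real mat"
  assumes X: "X \<in> carrier_mat n n" and W: "W \<in> carrier_mat n n" and ij: "i < n" "j < n"
  shows "(transpose_mat W * X * W) $$ (i,j) = col W i \<bullet> (X *\<^sub>v col W j)"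
proof -
  have "transpose_mat W * X * W = transpose_mat W * (X * W)"
    using X W by (simp add: assoc_mult_mat[of _ n n _ n _ n])
  thus ?thesis using X W ij by (simp add: col_mult2 del: col_mult)
qed

lemma orth_entry:
  fixes W :: "real mat"
  assumes W: "W \<in> carrier_mat n n" and WW: "transpose_mat W * W = 1\<^sub>m n" and ij: "i < n" "j < n"
  shows "col W i \<bullet> col W j = (if i = j then 1 else 0)"
proof -
  have "(transpose_mat W * W) $$ (i,j) = col W i \<bullet> col W j" using W ij by simp
  thus ?thesis using WW ij by simp
qed

lemma spectral:
  fixes A :: "real mat"
  assumes "A \<in> carrier_mat n n" "transpose_mat A = A"
  shows "\<exists>U f. U \<in> carrier_mat n n \<and> transpose_mat U * U = 1\<^sub>m n \<and> transpose_mat U * A * U = dg n f"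
  using assms
proof (induct n arbitrary: A)
  case 0
  show ?case
    by (intro exI[of _ "1\<^sub>m 0"] exI[of _ "\<lambda>_. 0"], insert 0, auto intro!: eq_matI simp: dg_def)
next
  case (Suc m A)
  note A = Suc(2) and sym = Suc(3)
  obtain e where "eigenvalue A e" using sym_real_eigenvalue[OF A sym] by auto
  then obtain v0 where v0: "v0 \<in> carrier_vec (Suc m)" "v0 \<noteq> 0\<^sub>v (Suc m)" "A *\<^sub>v v0 = e \<cdot>\<^sub>v v0"
    unfolding eigenvalue_def eigenvector_def using A by auto
  have "\<exists>i < Suc m. v0 $ i \<noteq> 0" using v0 by (metis carrier_vecD eq_vecI index_zero_vec(1) index_zero_vec(2))
  then obtain i0 where i0: "i0 < Suc m" "v0 $ i0 \<noteq> 0" by blast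
  have "(v0 $ i0)^2 \<le> (\<Sum>i\<in>{0..<Suc m}. (v0$i)^2)" by (rule member_le_sum, insert i0, auto)
  moreover have "v0 \<bullet> v0 = (\<Sum>i\<in>{0..<Suc m}. (v0$i)^2)"
    unfolding scalar_prod_def power2_eq_square using v0(1) by (intro sum.cong, auto)
  ultimately have "v0 \<bullet> v0 \<ge> (v0 $ i0)^2" by simp
  hence vpos: "v0 \<bullet> v0 > 0" using i0 by (smt (verit) zero_less_power2)
  define v where "v = (1 / sqrt (v0 \<bullet> v0)) \<cdot>\<^sub>v v0"
  have v: "v \<in> carrier_vec (Suc m)" unfolding v_def using v0 by auto
  have v1: "v \<bullet> v = 1" unfolding v_def using v0(1) vpos
    by (simp add: real_sqrt_mult[symmetric])
  have Av: "A *\<^sub>v v = e \<cdot>\<^sub>v v" unfolding v_def using v0 A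
    by (simp add: mult_mat_vec smult_smult_assoc mult.commute)
  obtain W where W: "W \<in> carrier_mat (Suc m) (Suc m)" and WW: "transpose_mat W * W = 1\<^sub>m (Suc m)"
    and W0: "col W 0 = v" using orth_completion[OF v v1] by blast
  define A' where "A' = transpose_mat W * A * W"
  have A': "A' \<in> carrier_mat (Suc m) (Suc m)" using A W unfolding A'_def by auto
  have A'sym: "transpose_mat A' = A'"
  proof -
    have WtA: "transpose_mat W * A \<in> carrier_mat (Suc m) (Suc m)" using A W by auto
    have "transpose_mat A' = transpose_mat W * transpose_mat (transpose_mat W * A)"
      unfolding A'_def by (rule transpose_mult[OF WtA W])
    also have "transpose_mat (transpose_mat W * A) = transpose_mat A * W"
      using transpose_mult[of "transpose_mat W" "Suc m" "Suc m" A "Suc m"] A W by simp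
    also have "transpose_mat W * (transpose_mat A * W) = A'"
      unfolding sym A'_def using A W by (simp add: assoc_mult_mat[of _ "Suc m" "Suc m" _ "Suc m" _ "Suc m"])
    finally show ?thesis .
  qed
  have A'i0: "A' $$ (i, 0) = (if i = 0 then e else 0)" if i: "i < Suc m" for i
  proof -
    have "A' $$ (i, 0) = col W i \<bullet> (A *\<^sub>v col W 0)"
      unfolding A'_def by (rule sandwich_entry[OF A W i], simp)
    also have "\<dots> = e * (col W i \<bullet> col W 0)" unfolding W0 Av
      using v W i by simp
    also have "\<dots> = (if i = 0 then e else 0)" using orth_entry[OF W WW i, of 0] by simp
    finally show ?thesis .
  qed
  have A'0j: "A' $$ (0, j) = (if j = 0 then e else 0)" if j: "j < Suc m" for j
  proof -
    have "A' $$ (0, j) = transpose_mat A' $$ (j, 0)" using A' j by simp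
    thus ?thesis using A'sym A'i0[OF j] by simp
  qed
  define A3 where "A3 = mat m m (\<lambda>(i,j). A' $$ (Suc i, Suc j))"
  have A3: "A3 \<in> carrier_mat m m" unfolding A3_def by simp
  have A3sym: "transpose_mat A3 = A3"
  proof (rule eq_matI)
    fix i j assume ij: "i < dim_row A3" "j < dim_col A3"
    have "A' $$ (Suc j, Suc i) = transpose_mat A' $$ (Suc i, Suc j)" using ij A' A3 by simp
    thus "transpose_mat A3 $$ (i, j) = A3 $$ (i, j)" using ij A3 A'sym unfolding A3_def by simp
  qed (insert A3, auto)
  define E where "E = mat 1 1 (\<lambda>_. e)"
  have E: "E \<in> carrier_mat 1 1" unfolding E_def by simp
  have A'block: "A' = four_block_mat E (0\<^sub>m 1 m) (0\<^sub>m m 1) A3"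
    by (rule eq_matI, insert A' A'i0 A'0j, auto simp: A3_def E_def)
  obtain U3 f3 where U3: "U3 \<in> carrier_mat m m" and U3U3: "transpose_mat U3 * U3 = 1\<^sub>m m"
    and U3A3: "transpose_mat U3 * A3 * U3 = dg m f3"
    using Suc(1)[OF A3 A3sym] by blast
  define F where "F = four_block_mat (1\<^sub>m 1) (0\<^sub>m 1 m) (0\<^sub>m m 1) U3"
  have F: "F \<in> carrier_mat (Suc m) (Suc m)" unfolding F_def using U3
    using four_block_carrier_mat[of "1\<^sub>m 1" 1 1 U3 m m] by simp
  have Ft: "transpose_mat F = four_block_mat (1\<^sub>m 1) (0\<^sub>m 1 m) (0\<^sub>m m 1) (transpose_mat U3)"
    unfolding F_def using U3 by (subst transpose_four_block_mat, auto)
  define U where "U = W * F"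
  have U: "U \<in> carrier_mat (Suc m) (Suc m)" unfolding U_def using W F by auto
  have Ut: "transpose_mat U = transpose_mat F * transpose_mat W"
    unfolding U_def by (rule transpose_mult[OF W F])
  have "transpose_mat U * U = transpose_mat F * (transpose_mat W * W) * F"
    unfolding Ut unfolding U_def using W F
    by (simp add: assoc_mult_mat[of _ "Suc m" "Suc m" _ "Suc m" _ "Suc m"])
  also have "\<dots> = transpose_mat F * F" unfolding WW using F by simp
  also have "\<dots> = 1\<^sub>m (Suc m)" unfolding Ft unfolding F_def using U3 U3U3
    by (subst mult_four_block_mat[of _ 1 1 _ m _ m _ _ 1 _ m], auto)
  finally have UU: "transpose_mat U * U = 1\<^sub>m (Suc m)" .
  have "transpose_mat U * A * U = transpose_mat F * A' * F"
    unfolding Ut unfolding U_def A'_def using W F A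
    by (simp add: assoc_mult_mat[of _ "Suc m" "Suc m" _ "Suc m" _ "Suc m"])
  also have "transpose_mat F * A' = four_block_mat E (0\<^sub>m 1 m) (0\<^sub>m m 1) (transpose_mat U3 * A3)"
    unfolding Ft A'block using U3 A3 E
    by (subst mult_four_block_mat[of _ 1 1 _ m _ m _ _ 1 _ m], auto)
  also have "\<dots> * F = four_block_mat E (0\<^sub>m 1 m) (0\<^sub>m m 1) (transpose_mat U3 * A3 * U3)"
    unfolding F_def using U3 A3 E
    by (subst mult_four_block_mat[of _ 1 1 _ m _ m _ _ 1 _ m], auto)
  also have "\<dots> = dg (Suc m) (\<lambda>i. if i = 0 then e else f3 (i - 1))"
    unfolding U3A3 by (rule eq_matI, auto simp: dg_def E_def)
  finally show ?case using U UU by blast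
qed



lemma order_linears: "Polynomial.order x (\<Prod>a\<leftarrow>L. [:- a, 1:]) = count_list L (x::real)"
proof -
  have "Polynomial.order x (\<Prod>a\<leftarrow>L. [:- a, 1:]) = sum_list (map (Polynomial.order x) (map (\<lambda>a. [:- a, 1:]) L))"
    by (subst order_prod_list, auto)
  also have "\<dots> = count_list L x" by (induct L, auto simp: order_linear')
  finally show ?thesis .
qed

lemma sum_count_real: "(\<Sum>x\<in>set L. real (count_list L x) * g x) = sum_list (map g L)"
proof (induct L)
  case (Cons a L)
  have "(\<Sum>x\<in>set (a#L). real (count_list (a#L) x) * g x)
      = (\<Sum>x\<in>insert a (set L). real (count_list L x) * g x + (if x = a then g x else 0))"
    by (intro sum.cong, auto simp: algebra_simps)
  also have "\<dots> = (\<Sum>x\<in>insert a (set L). real (count_list L x) * g x) + g a"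
    by (simp add: sum.distrib)
  also have "(\<Sum>x\<in>insert a (set L). real (count_list L x) * g x) = (\<Sum>x\<in>set L. real (count_list L x) * g x)"
    by (cases "a \<in> set L", auto simp: insert_absorb count_list_0_iff)
  finally show ?case using Cons by simp
qed simp

locale spec =
  fixes A U :: "real mat" and n :: nat and f :: "nat \<Rightarrow> real"
  assumes A: "A \<in> carrier_mat n n" and U: "U \<in> carrier_mat n n"
    and UU: "transpose_mat U * U = 1\<^sub>m n" and UAU: "transpose_mat U * A * U = dg n f"
begin

lemma UU': "U * transpose_mat U = 1\<^sub>m n"
  using mat_mult_left_right_inverse[of "transpose_mat U" n U] U UU by auto

lemma A_eq: "A = U * dg n f * transpose_mat U"
proof -
  have "U * dg n f * transpose_mat U = U * (transpose_mat U * A * U) * transpose_mat U" unfolding UAU ..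
  also have "\<dots> = (U * transpose_mat U) * A * (U * transpose_mat U)"
    using A U by (simp add: assoc_mult_mat[of _ n n _ n _ n])
  also have "\<dots> = A" unfolding UU' using A by simp
  finally show ?thesis by simp
qed

lemma dg_carrier[simp]: "dg n g \<in> carrier_mat n n" unfolding dg_def by simp

lemma char_poly_A: "char_poly A = (\<Prod>a\<leftarrow>map f [0..<n]. [:- a, 1:])"
proof -
  have "similar_mat_wit A (dg n f) U (transpose_mat U)"
    by (rule similar_mat_witI[OF UU' UU A_eq A], insert U, auto)
  hence "similar_mat A (dg n f)" unfolding similar_mat_def by blast
  hence "char_poly A = char_poly (dg n f)" by (rule char_poly_similar)
  also have "\<dots> = (\<Prod>a\<leftarrow>diag_mat (dg n f). [:- a, 1:])"
    by (rule char_poly_upper_triangular[of _ n], auto simp: upper_triangular_def dg_def)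
  also have "diag_mat (dg n f) = map f [0..<n]" unfolding diag_mat_def dg_def by auto
  finally show ?thesis .
qed

lemma eigenvalue_iff: "eigenvalue A x \<longleftrightarrow> x \<in> f ` {..<n}"
proof -
  have "eigenvalue A x \<longleftrightarrow> poly (char_poly A) x = 0" by (rule eigenvalue_root_char_poly[OF A])
  also have "\<dots> \<longleftrightarrow> x \<in> set (map f [0..<n])" unfolding char_poly_A
    by (induct "map f [0..<n]", auto simp: poly_prod_list_zero_iff)
  finally show ?thesis by auto
qed

lemma eig_set: "{x. eigenvalue A x} = f ` {..<n}" using eigenvalue_iff by auto

lemma eig_mult_eq: "eig_mult A x = count_list (map f [0..<n]) x"
  unfolding eig_mult_def char_poly_A by (rule order_linears)

lemma renyi_eq: "renyi_tilde \<alpha> A = (\<Sum>i<n. (f i / mtrace A) powr \<alpha>)"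
proof -
  let ?g = "\<lambda>x. (x / mtrace A) powr \<alpha>"
  have "renyi_tilde \<alpha> A = (\<Sum>x\<in>set (map f [0..<n]). real (count_list (map f [0..<n]) x) * ?g x)"
    unfolding renyi_tilde_def eig_set eig_mult_eq by (intro sum.cong, auto)
  also have "\<dots> = sum_list (map ?g (map f [0..<n]))"
    by (rule sum_count_real)
  also have "\<dots> = (\<Sum>i<n. ?g (f i))"
    by (simp add: sum_list_distinct_conv_sum_set atLeast0LessThan)
  finally show ?thesis .
qed

lemma lmax: "lambda_max A = Max (f ` {..<n})" unfolding lambda_max_def eig_set ..

lemma f_le_lmax: "i < n \<Longrightarrow> f i \<le> lambda_max A" unfolding lmax by auto

lemma f_quad: "i < n \<Longrightarrow> f i = col U i \<bullet> (A *\<^sub>v col U i)"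
  using sandwich_entry[OF A U, of i i] UAU by (simp add: dg_def)

end



lemma bern_powr:
  fixes t a :: real assumes t: "t \<ge> 0" and a: "a > 1"
  shows "1 + a * (t - 1) \<le> t powr a"
proof -
  define h where "h = (\<lambda>t::real. t powr a - 1 - a * (t - 1))"
  have dh: "(h has_real_derivative (a * x powr (a - 1) - a)) (at x)" if "x > 0" for x
    unfolding h_def using that
    by (auto intro!: derivative_eq_intros)
  show ?thesis
  proof (cases "t \<ge> 1")
    case True
    have "h 1 \<le> h t"
    proof (rule DERIV_nonneg_imp_nondecreasing[OF True])
      fix x assume "1 \<le> x" "x \<le> t"
      hence x: "x \<ge> 1" by auto
      have "1 \<le> x powr (a - 1)" using x a by (intro ge_one_powr_ge_zero, auto)
      hence "a * x powr (a - 1) - a \<ge> 0" using a by (simp add: mult_left_mono[of 1 _ a, simplified])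
      thus "\<exists>y. (h has_real_derivative y) (at x) \<and> 0 \<le> y" using dh[of x] x by auto
    qed
    thus ?thesis unfolding h_def by simp
  next
    case False
    show ?thesis
    proof (cases "t = 0")
      case True thus ?thesis using a by simp
    next
      case False2: False
      hence tpos: "t > 0" using t by auto
      have "h 1 \<le> h t"
      proof (rule DERIV_nonpos_imp_nonincreasing[of t 1 h])
        show "t \<le> 1" using False by auto
        fix x assume "t \<le> x" "x \<le> 1"
        hence x: "x > 0" "x \<le> 1" using tpos by auto
        have "x powr (a - 1) \<le> 1" using x a by (intro powr_le1, auto)
        hence "a * x powr (a - 1) - a \<le> 0" using a by (simp add: mult_left_mono[of _ 1 a, simplified])
        thus "\<exists>y. (h has_real_derivative y) (at x) \<and> y \<le> 0" using dh[of x] x by auto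
      qed
      thus ?thesis unfolding h_def by simp
    qed
  qed
qed

lemma tangent_powr:
  fixes x y a :: real assumes x: "x \<ge> 0" and y: "y \<ge> 0" and a: "a > 1"
  shows "y powr a + a * y powr (a - 1) * (x - y) \<le> x powr a"
proof (cases "y = 0")
  case True thus ?thesis using x a by simp
next
  case False
  hence yp: "y > 0" using y by auto
  have "1 + a * (x / y - 1) \<le> (x / y) powr a" by (rule bern_powr, insert x yp a, auto)
  hence "y powr a * (1 + a * (x / y - 1)) \<le> y powr a * (x / y) powr a"
    by (rule mult_left_mono, simp)
  also have "y powr a * (x / y) powr a = x powr a" using x yp by (simp add: powr_divide)
  also have "y powr a * (1 + a * (x / y - 1)) = y powr a + a * (y powr a / y) * (x - y)"
    using yp by (simp add: field_simps)
  also have "y powr a / y = y powr (a - 1)" using yp by (simp add: powr_diff)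
  finally show ?thesis .
qed

lemma sum_abs_cs:
  fixes g :: "nat \<Rightarrow> real"
  shows "(\<Sum>j<n. \<bar>g j\<bar>) \<le> sqrt (real n) * sqrt (\<Sum>j<n. (g j)^2)"
proof -
  have "0 \<le> (\<Sum>i<n. \<Sum>j<n. (\<bar>g i\<bar> - \<bar>g j\<bar>)^2)" by (intro sum_nonneg, auto)
  also have "\<dots> = (\<Sum>i<n. \<Sum>j<n. (g i)^2 + (g j)^2 - 2 * \<bar>g i\<bar> * \<bar>g j\<bar>)"
    by (intro sum.cong refl, simp add: power2_eq_square algebra_simps)
  also have "\<dots> = (\<Sum>i<n. \<Sum>j<n. (g i)^2) + (\<Sum>i<n. \<Sum>j<n. (g j)^2)
       - 2 * (\<Sum>i<n. \<Sum>j<n. \<bar>g i\<bar> * \<bar>g j\<bar>)"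
    by (simp add: sum_subtractf sum.distrib sum_distrib_left mult.assoc)
  also have "(\<Sum>i<n. \<Sum>j<n. \<bar>g i\<bar> * \<bar>g j\<bar>) = (\<Sum>j<n. \<bar>g j\<bar>)^2"
    by (simp add: power2_eq_square sum_product)
  also have "(\<Sum>i<n. \<Sum>j<n. (g i)^2) = real n * (\<Sum>j<n. (g j)^2)"
    by (simp add: sum_distrib_left)
  also have "(\<Sum>i<n. \<Sum>j<n. (g j)^2) = real n * (\<Sum>j<n. (g j)^2)"
    by simp
  finally have "(\<Sum>j<n. \<bar>g j\<bar>)^2 \<le> real n * (\<Sum>j<n. (g j)^2)" by simp
  hence "sqrt ((\<Sum>j<n. \<bar>g j\<bar>)^2) \<le> sqrt (real n * (\<Sum>j<n. (g j)^2))"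
    using real_sqrt_le_mono by blast
  thus ?thesis by (simp add: real_sqrt_mult sum_nonneg)
qed



definition sqs :: "real mat \<Rightarrow> real" where
  "sqs N = (\<Sum>i<dim_row N. \<Sum>j<dim_col N. (N $$ (i, j))^2)"

lemma frob_sqs: "frob_norm N = sqrt (sqs N)" unfolding frob_norm_def sqs_def ..

lemma sprod_sq: "(w :: real vec) \<bullet> w = (\<Sum>i<dim_vec w. (w $ i)^2)"
  unfolding scalar_prod_def by (simp add: power2_eq_square atLeast0LessThan)

lemma sqs_cols: "N \<in> carrier_mat r c \<Longrightarrow> sqs N = (\<Sum>j<c. col N j \<bullet> col N j)"
  unfolding sqs_def sprod_sq by (subst sum.swap, auto intro!: sum.cong)

lemma sqs_transpose: "sqs (transpose_mat N) = sqs N"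
  unfolding sqs_def by (subst sum.swap, auto intro!: sum.cong)

lemma norm_pres:
  fixes V :: "real mat"
  assumes V: "V \<in> carrier_mat d d" and VV: "V * transpose_mat V = 1\<^sub>m d" and w: "w \<in> carrier_vec d"
  shows "(transpose_mat V *\<^sub>v w) \<bullet> (transpose_mat V *\<^sub>v w) = w \<bullet> w"
proof -
  have "(transpose_mat V *\<^sub>v w) \<bullet> (transpose_mat V *\<^sub>v w) = w \<bullet> (V *\<^sub>v (transpose_mat V *\<^sub>v w))"
    by (rule transpose_vec_mult_scalar[OF V _ w], insert V w, auto)
  also have "V *\<^sub>v (transpose_mat V *\<^sub>v w) = (V * transpose_mat V) *\<^sub>v w" using V w by simp
  also have "\<dots> = w" unfolding VV using w by simp
  finally show ?thesis .
qed

lemma sqs_left: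
  fixes V N :: "real mat"
  assumes V: "V \<in> carrier_mat d d" and VV: "V * transpose_mat V = 1\<^sub>m d" and N: "N \<in> carrier_mat d c"
  shows "sqs (transpose_mat V * N) = sqs N"
proof -
  have "sqs (transpose_mat V * N) = (\<Sum>j<c. col (transpose_mat V * N) j \<bullet> col (transpose_mat V * N) j)"
    by (rule sqs_cols, insert V N, auto)
  also have "\<dots> = (\<Sum>j<c. col N j \<bullet> col N j)"
    by (intro sum.cong refl, insert V N, simp add: norm_pres[OF V VV] col_mult2 del: col_mult)
  also have "\<dots> = sqs N" using sqs_cols[OF N] by simp
  finally show ?thesis .
qed

lemma sqs_sandwich:
  fixes V Z :: "real mat"
  assumes V: "V \<in> carrier_mat d d" and VV: "V * transpose_mat V = 1\<^sub>m d" and Z: "Z \<in> carrier_mat d d"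
  shows "sqs (transpose_mat V * Z * V) = sqs Z"
proof -
  have "transpose_mat V * Z * V = transpose_mat V * (Z * V)" using V Z by (simp add: assoc_mult_mat[of _ d d _ d _ d])
  hence "sqs (transpose_mat V * Z * V) = sqs (Z * V)" using sqs_left[OF V VV, of "Z * V" d] V Z by simp
  also have "\<dots> = sqs (transpose_mat (Z * V))" by (simp add: sqs_transpose)
  also have "transpose_mat (Z * V) = transpose_mat V * transpose_mat Z" by (rule transpose_mult[OF Z V])
  also have "sqs \<dots> = sqs (transpose_mat Z)" by (rule sqs_left[OF V VV], insert Z, auto)
  also have "\<dots> = sqs Z" by (simp add: sqs_transpose)
  finally show ?thesis .
qed

lemma sqs_diag_le:
  assumes N: "N \<in> carrier_mat d d"
  shows "(\<Sum>j<d. (N $$ (j, j))^2) \<le> sqs N"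
proof -
  have "(\<Sum>j<d. (N $$ (j, j))^2) \<le> (\<Sum>j<d. \<Sum>i<d. (N $$ (j, i))^2)"
    by (intro sum_mono member_le_sum, auto)
  thus ?thesis unfolding sqs_def using N by simp
qed



lemma dg_mult_vec:
  assumes q: "q \<in> carrier_vec d"
  shows "q \<bullet> (dg d lam *\<^sub>v q) = (\<Sum>i<d. lam i * (q $ i)^2)"
proof -
  have "dg d lam *\<^sub>v q = vec d (\<lambda>i. lam i * q $ i)"
  proof (rule eq_vecI)
    fix i assume "i < dim_vec (vec d (\<lambda>i. lam i * q $ i))"
    hence i: "i < d" by simp
    have "(dg d lam *\<^sub>v q) $ i = (\<Sum>k\<in>{0..<d}. (if i = k then lam i else 0) * q $ k)"
      using i q by (auto simp: dg_def scalar_prod_def intro!: sum.cong)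
    also have "\<dots> = (\<Sum>k\<in>{0..<d}. if k = i then lam i * q $ k else 0)" by (intro sum.cong, auto)
    also have "\<dots> = lam i * q $ i" using i by (simp add: sum.delta)
    finally show "(dg d lam *\<^sub>v q) $ i = vec d (\<lambda>i. lam i * q $ i) $ i" using i by simp
  qed (auto simp: dg_def)
  thus ?thesis using q unfolding scalar_prod_def
    by (auto simp: power2_eq_square atLeast0LessThan intro!: sum.cong)
qed

lemma half:
  fixes X Y U V :: "real mat" and lam mu :: "nat \<Rightarrow> real"
  assumes sX: "spec X U d lam" and sY: "spec Y V d mu"
    and lam0: "\<forall>i<d. 0 \<le> lam i" and mu0: "\<forall>j<d. 0 \<le> mu j" and muL: "\<forall>j<d. mu j \<le> Lam"
    and T: "T > 0" and a: "\<alpha> > 1"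
  shows "(\<Sum>i<d. (lam i / T) powr \<alpha>) - (\<Sum>j<d. (mu j / T) powr \<alpha>)
     \<ge> - (\<alpha> * (Lam / T) powr (\<alpha> - 1) / T * (sqrt (real d) * frob_norm (X - Y)))"
proof -
  interpret X: spec X U d lam by fact
  interpret Y: spec Y V d mu by fact
  note U = X.U and V = Y.U and XA = X.A and YA = Y.A
  define p where "p i j = col U i \<bullet> col V j" for i j
  have cU: "i < d \<Longrightarrow> col U i \<in> carrier_vec d" for i using U by auto
  have cV: "i < d \<Longrightarrow> col V i \<in> carrier_vec d" for i using V by auto
  have rows: "(\<Sum>j<d. (p i j)^2) = 1" if i: "i < d" for i
  proof -
    have "(\<Sum>j<d. (p i j)^2) = (transpose_mat V *\<^sub>v col U i) \<bullet> (transpose_mat V *\<^sub>v col U i)"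
      unfolding sprod_sq using V cU[OF i] cV
      by (auto intro!: sum.cong simp: p_def comm_scalar_prod[of _ d])
    also have "\<dots> = col U i \<bullet> col U i" by (rule norm_pres[OF V Y.UU' cU[OF i]])
    also have "\<dots> = 1" using orth_entry[OF U X.UU i i] by simp
    finally show ?thesis .
  qed
  have cols: "(\<Sum>i<d. (p i j)^2) = 1" if j: "j < d" for j
  proof -
    have "(\<Sum>i<d. (p i j)^2) = (transpose_mat U *\<^sub>v col V j) \<bullet> (transpose_mat U *\<^sub>v col V j)"
      unfolding sprod_sq using U cV[OF j] cU
      by (auto intro!: sum.cong simp: p_def)
    also have "\<dots> = col V j \<bullet> col V j" by (rule norm_pres[OF U X.UU' cV[OF j]])
    also have "\<dots> = 1" using orth_entry[OF V Y.UU j j] by simp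
    finally show ?thesis .
  qed
  have diagX: "col V j \<bullet> (X *\<^sub>v col V j) = (\<Sum>i<d. (p i j)^2 * lam i)" if j: "j < d" for j
  proof -
    let ?c = "col V j"
    let ?q = "transpose_mat U *\<^sub>v ?c"
    have q: "?q \<in> carrier_vec d" by (rule mult_mat_vec_carrier[of _ d d], insert U cV[OF j], auto)
    have "X *\<^sub>v ?c = U *\<^sub>v (dg d lam *\<^sub>v ?q)"
      by (subst X.A_eq, insert U cV[OF j], simp add: assoc_mult_mat_vec[of _ d d _ d])
    hence "?c \<bullet> (X *\<^sub>v ?c) = ?c \<bullet> (U *\<^sub>v (dg d lam *\<^sub>v ?q))" by simp
    also have "\<dots> = ?q \<bullet> (dg d lam *\<^sub>v ?q)"
      by (rule transpose_vec_mult_scalar[symmetric, OF U _ cV[OF j]], rule mult_mat_vec_carrier[of _ d d], insert q, auto simp: dg_def)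
    also have "\<dots> = (\<Sum>i<d. lam i * (?q $ i)^2)" by (rule dg_mult_vec[OF q])
    also have "\<dots> = (\<Sum>i<d. (p i j)^2 * lam i)"
      using U by (auto intro!: sum.cong simp: p_def)
    finally show ?thesis .
  qed
  have diagY: "col V j \<bullet> (Y *\<^sub>v col V j) = mu j" if j: "j < d" for j
    using Y.f_quad[OF j] by simp
  define M where "M = transpose_mat V * (X - Y) * V"
  have XY: "X - Y \<in> carrier_mat d d" using XA YA by auto
  have Mjj: "M $$ (j, j) = (\<Sum>i<d. (p i j)^2 * lam i) - mu j" if j: "j < d" for j
  proof -
    have "M $$ (j, j) = col V j \<bullet> ((X - Y) *\<^sub>v col V j)"
      unfolding M_def by (rule sandwich_entry[OF XY V j j])
    also have "\<dots> = col V j \<bullet> (X *\<^sub>v col V j) - col V j \<bullet> (Y *\<^sub>v col V j)"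
      using XA YA cV[OF j]
      by (simp add: minus_mult_distrib_mat_vec[OF XA YA] scalar_prod_minus_distrib[of _ d])
    finally show ?thesis using diagX[OF j] diagY[OF j] by simp
  qed
  define F where "F x = (x / T) powr \<alpha>" for x
  define G where "G x = \<alpha> * (x / T) powr (\<alpha> - 1) / T" for x
  have tang: "F l - F m \<ge> G m * (l - m)" if "l \<ge> 0" "m \<ge> 0" for l m
  proof -
    have "(m/T) powr \<alpha> + \<alpha> * (m/T) powr (\<alpha> - 1) * (l/T - m/T) \<le> (l/T) powr \<alpha>"
      by (rule tangent_powr, insert that T a, auto)
    moreover have "\<alpha> * (m/T) powr (\<alpha> - 1) * (l/T - m/T) = G m * (l - m)"
      unfolding G_def using T by (simp add: field_simps)
    ultimately show ?thesis unfolding F_def by simp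
  qed
  have G0: "G m \<ge> 0" for m unfolding G_def using T a by auto
  have GL: "G m \<le> G Lam" if "0 \<le> m" "m \<le> Lam" for m
    unfolding G_def using that T a
    by (auto intro!: divide_right_mono mult_left_mono powr_mono2 divide_nonneg_pos)
  have c1: "(\<Sum>i<d. F (lam i)) - (\<Sum>j<d. F (mu j))
      = (\<Sum>j<d. \<Sum>i<d. (p i j)^2 * (F (lam i) - F (mu j)))"
  proof -
    have "(\<Sum>i<d. F (lam i)) = (\<Sum>i<d. \<Sum>j<d. (p i j)^2 * F (lam i))"
      by (intro sum.cong refl, simp add: sum_distrib_right[symmetric] rows)
    also have "\<dots> = (\<Sum>j<d. \<Sum>i<d. (p i j)^2 * F (lam i))" by (rule sum.swap)
    finally have 1: "(\<Sum>i<d. F (lam i)) = \<dots>" .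
    have 2: "(\<Sum>j<d. F (mu j)) = (\<Sum>j<d. \<Sum>i<d. (p i j)^2 * F (mu j))"
      by (intro sum.cong refl, simp add: sum_distrib_right[symmetric] cols)
    show ?thesis unfolding 1 2 by (simp add: sum_subtractf right_diff_distrib)
  qed
  have c2: "(\<Sum>j<d. \<Sum>i<d. (p i j)^2 * (F (lam i) - F (mu j))) \<ge> (\<Sum>j<d. \<Sum>i<d. (p i j)^2 * (G (mu j) * (lam i - mu j)))"
    by (intro sum_mono mult_left_mono tang, insert lam0 mu0, auto)
  have c3: "(\<Sum>j<d. \<Sum>i<d. (p i j)^2 * (G (mu j) * (lam i - mu j))) = (\<Sum>j<d. G (mu j) * M $$ (j, j))"
  proof (intro sum.cong refl)
    fix j assume j: "j \<in> {..<d}"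
    have "(\<Sum>i<d. (p i j)^2 * (G (mu j) * (lam i - mu j)))
       = G (mu j) * ((\<Sum>i<d. (p i j)^2 * lam i) - (\<Sum>i<d. (p i j)^2) * mu j)"
      by (simp add: sum_distrib_left sum_distrib_right sum_subtractf algebra_simps)
    also have "\<dots> = G (mu j) * M $$ (j, j)" using j cols Mjj by simp
    finally show "(\<Sum>i<d. (p i j)^2 * (G (mu j) * (lam i - mu j))) = G (mu j) * M $$ (j, j)" .
  qed
  have c4: "(\<Sum>j<d. G (mu j) * M $$ (j, j)) \<ge> - (\<Sum>j<d. G Lam * \<bar>M $$ (j, j)\<bar>)"
  proof -
    have "(\<Sum>j<d. G (mu j) * M $$ (j, j)) \<ge> (\<Sum>j<d. - (G Lam * \<bar>M $$ (j, j)\<bar>))"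
    proof (intro sum_mono)
      fix j assume j: "j \<in> {..<d}"
      have "G (mu j) * \<bar>M $$ (j, j)\<bar> \<le> G Lam * \<bar>M $$ (j, j)\<bar>"
        by (rule mult_right_mono, insert GL[of "mu j"] mu0 muL j, auto)
      moreover have "- (G (mu j) * \<bar>M $$ (j, j)\<bar>) \<le> G (mu j) * M $$ (j, j)"
        using G0[of "mu j"] by (smt (verit) abs_mult abs_of_nonneg abs_le_iff)
      ultimately show "- (G Lam * \<bar>M $$ (j, j)\<bar>) \<le> G (mu j) * M $$ (j, j)" by linarith
    qed
    thus ?thesis by (simp add: sum_negf)
  qed
  have c5: "(\<Sum>j<d. G Lam * \<bar>M $$ (j, j)\<bar>) = G Lam * (\<Sum>j<d. \<bar>M $$ (j, j)\<bar>)"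
    by (simp add: sum_distrib_left)
  have main: "(\<Sum>i<d. F (lam i)) - (\<Sum>j<d. F (mu j)) \<ge> - (G Lam * (\<Sum>j<d. \<bar>M $$ (j, j)\<bar>))"
    using c1 c2 c3 c4 c5 by linarith
  have M: "M \<in> carrier_mat d d" unfolding M_def using V XY by auto
  have "(\<Sum>j<d. \<bar>M $$ (j, j)\<bar>) \<le> sqrt (real d) * sqrt (\<Sum>j<d. (M $$ (j, j))^2)"
    by (rule sum_abs_cs)
  also have "sqrt (\<Sum>j<d. (M $$ (j, j))^2) \<le> sqrt (sqs M)"
    using sqs_diag_le[OF M] by simp
  also have "sqs M = sqs (X - Y)" unfolding M_def by (rule sqs_sandwich[OF V Y.UU' XY])
  finally have "(\<Sum>j<d. \<bar>M $$ (j, j)\<bar>) \<le> sqrt (real d) * frob_norm (X - Y)"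
    unfolding frob_sqs by (simp add: mult_left_mono)
  hence "G Lam * (\<Sum>j<d. \<bar>M $$ (j, j)\<bar>) \<le> G Lam * (sqrt (real d) * frob_norm (X - Y))"
    by (rule mult_left_mono[OF _ G0])
  with main show ?thesis unfolding F_def G_def by simp
qed



lemma quad_form:
  fixes M :: "real mat"
  assumes M: "M \<in> carrier_mat d d" and x: "x \<in> carrier_vec d"
  shows "x \<bullet> (M *\<^sub>v x) = (\<Sum>i<d. \<Sum>j<d. x $ i * M $$ (i, j) * x $ j)"
  using M x
  by (auto simp: scalar_prod_def sum_distrib_left atLeast0LessThan mult.assoc intro!: sum.cong)

lemma blk_psd:
  fixes H :: "real mat"
  assumes H: "sym_psd d H"
  shows "sym_psd d (blkdiag_part blk H)"
proof -
  let ?B = "blkdiag_part blk H"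
  have Hc: "H \<in> carrier_mat d d" and Hs: "transpose_mat H = H"
    and Hp: "\<And>v. v \<in> carrier_vec d \<Longrightarrow> v \<bullet> (H *\<^sub>v v) \<ge> 0" using H unfolding sym_psd_def by auto
  have Bc: "?B \<in> carrier_mat d d" using Hc unfolding blkdiag_part_def by auto
  have Bij: "i < d \<Longrightarrow> j < d \<Longrightarrow> ?B $$ (i, j) = (if blk i = blk j then H $$ (i, j) else 0)" for i j
    using Hc unfolding blkdiag_part_def by auto
  have Hji: "i < d \<Longrightarrow> j < d \<Longrightarrow> H $$ (j, i) = H $$ (i, j)" for i j
    using Hs Hc by (metis carrier_matD(1) carrier_matD(2) index_transpose_mat(1))
  have Bs: "transpose_mat ?B = ?B"
    by (rule eq_matI, insert Bc, auto simp: Bij Hji)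
  have Bp: "v \<bullet> (?B *\<^sub>v v) \<ge> 0" if v: "v \<in> carrier_vec d" for v
  proof -
    define S where "S = blk ` {..<d}"
    define w where "w b = vec d (\<lambda>i. if blk i = b then v $ i else 0)" for b
    have wc: "w b \<in> carrier_vec d" for b unfolding w_def by simp
    have "v \<bullet> (?B *\<^sub>v v) = (\<Sum>i<d. \<Sum>j<d. v $ i * ?B $$ (i, j) * v $ j)" by (rule quad_form[OF Bc v])
    also have "\<dots> = (\<Sum>i<d. \<Sum>j<d. \<Sum>b\<in>S. (w b) $ i * H $$ (i, j) * (w b) $ j)"
    proof (intro sum.cong refl)
      fix i j assume i: "i \<in> {..<d}" and j: "j \<in> {..<d}"
      have "(\<Sum>b\<in>S. (w b) $ i * H $$ (i, j) * (w b) $ j)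
          = (\<Sum>b\<in>S. if b = blk i then (if blk j = b then v $ i * H $$ (i, j) * v $ j else 0) else 0)"
        using i j by (intro sum.cong refl, auto simp: w_def)
      also have "\<dots> = (if blk j = blk i then v $ i * H $$ (i, j) * v $ j else 0)"
        using i by (simp add: sum.delta' S_def)
      also have "\<dots> = v $ i * ?B $$ (i, j) * v $ j" using i j by (auto simp: Bij)
      finally show "v $ i * ?B $$ (i, j) * v $ j = (\<Sum>b\<in>S. (w b) $ i * H $$ (i, j) * (w b) $ j)" by simp
    qed
    also have "\<dots> = (\<Sum>i<d. \<Sum>b\<in>S. \<Sum>j<d. (w b) $ i * H $$ (i, j) * (w b) $ j)"
      by (rule sum.cong[OF refl], rule sum.swap)
    also have "\<dots> = (\<Sum>b\<in>S. \<Sum>i<d. \<Sum>j<d. (w b) $ i * H $$ (i, j) * (w b) $ j)"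
      by (rule sum.swap)
    also have "\<dots> = (\<Sum>b\<in>S. w b \<bullet> (H *\<^sub>v w b))"
      by (intro sum.cong refl, rule quad_form[OF Hc wc, symmetric])
    also have "\<dots> \<ge> 0" by (intro sum_nonneg Hp wc)
    finally show ?thesis .
  qed
  show ?thesis unfolding sym_psd_def using Bc Bs Bp by auto
qed



lemma frob_swap:
  assumes "X \<in> carrier_mat d d" "Y \<in> carrier_mat d d"
  shows "frob_norm (Y - X) = frob_norm (X - Y)"
  unfolding frob_norm_def using assms
  by (auto intro!: arg_cong[where f = sqrt] sum.cong simp: power2_commute)

lemma psd_spec:
  assumes P: "sym_psd d X"
  shows "\<exists>U f. spec X U d f \<and> (\<forall>i<d. 0 \<le> f i)"
proof -
  have Xc: "X \<in> carrier_mat d d" and Xs: "transpose_mat X = X"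
    and Xp: "\<And>v. v \<in> carrier_vec d \<Longrightarrow> v \<bullet> (X *\<^sub>v v) \<ge> 0" using P unfolding sym_psd_def by auto
  obtain U f where U: "U \<in> carrier_mat d d" "transpose_mat U * U = 1\<^sub>m d" "transpose_mat U * X * U = dg d f"
    using spectral[OF Xc Xs] by blast
  interpret spec X U d f by (unfold_locales, insert Xc U, auto)
  have "\<forall>i<d. 0 \<le> f i" using f_quad Xp U by auto
  thus ?thesis using spec_axioms by blast
qed

theorem mainTheorem8:
  fixes d L :: nat and H :: "real mat" and blk :: "nat \<Rightarrow> nat" and \<alpha> :: real
  assumes H: "sym_psd d H"
    and blk_range: "\<forall>i<d. blk i < L"
    and blk_mono: "\<forall>i j. i \<le> j \<longrightarrow> j < d \<longrightarrow> blk i \<le> blk j"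
    and T_pos: "mtrace H > 0"
    and alpha: "\<alpha> > 1"
  shows "let B = blkdiag_part blk H; E = H - B; T = mtrace H;
             \<Lambda> = max (lambda_max H) (lambda_max B)
         in \<bar>renyi_tilde \<alpha> H - renyi_tilde \<alpha> B\<bar>
              \<le> \<alpha> * (\<Lambda> / T) powr (\<alpha> - 1) * (sqrt (real d) * frob_norm E / T)"
proof -
  define B where "B = blkdiag_part blk H"
  define T where "T = mtrace H"
  define Lam where "Lam = max (lambda_max H) (lambda_max B)"
  have Hc: "H \<in> carrier_mat d d" using H unfolding sym_psd_def by auto
  have Bc: "B \<in> carrier_mat d d" using Hc unfolding B_def blkdiag_part_def by auto
  have BP: "sym_psd d B" unfolding B_def by (rule blk_psd[OF H])
  obtain U lam where sH: "spec H U d lam" and lam0: "\<forall>i<d. 0 \<le> lam i" using psd_spec[OF H] by blast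
  obtain V mu where sB: "spec B V d mu" and mu0: "\<forall>i<d. 0 \<le> mu i" using psd_spec[OF BP] by blast
  interpret sH: spec H U d lam by fact
  interpret sB: spec B V d mu by fact
  have TB: "mtrace B = T" unfolding T_def mtrace_def B_def blkdiag_part_def using Hc by auto
  have lamL: "\<forall>i<d. lam i \<le> Lam" using sH.f_le_lmax unfolding Lam_def by force
  have muL: "\<forall>i<d. mu i \<le> Lam" using sB.f_le_lmax unfolding Lam_def by force
  have Tp: "T > 0" using T_pos unfolding T_def .
  have RH: "renyi_tilde \<alpha> H = (\<Sum>i<d. (lam i / T) powr \<alpha>)" unfolding sH.renyi_eq T_def ..
  have RB: "renyi_tilde \<alpha> B = (\<Sum>i<d. (mu i / T) powr \<alpha>)" unfolding sB.renyi_eq TB ..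
  define K where "K = \<alpha> * (Lam / T) powr (\<alpha> - 1) / T * (sqrt (real d) * frob_norm (H - B))"
  have 1: "renyi_tilde \<alpha> H - renyi_tilde \<alpha> B \<ge> - K"
    unfolding RH RB K_def by (rule half[OF sH sB lam0 mu0 muL Tp alpha])
  have 2: "renyi_tilde \<alpha> B - renyi_tilde \<alpha> H \<ge> - K"
    unfolding RH RB K_def frob_swap[OF Bc Hc] by (rule half[OF sB sH mu0 lam0 lamL Tp alpha])
  have "\<bar>renyi_tilde \<alpha> H - renyi_tilde \<alpha> B\<bar> \<le> K" using 1 2 by linarith
  also have "K = \<alpha> * (Lam / T) powr (\<alpha> - 1) * (sqrt (real d) * frob_norm (H - B) / T)"
    unfolding K_def by simp
  finally show ?thesis unfolding Let_def B_def[symmetric] T_def[symmetric] Lam_def[symmetric] .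
qed

end
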